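(* For every integer $k \geq 1$, let $\mathcal{P}(k)$ denote the greatest common divisor of all the sums $\sum_{i=1}^{k} P_{n+i}$, $n \geq 0$. Then $$\mathcal{P}(k) = \begin{cases} 2P_{k/2}, & \text{if } k \equiv 0 \pmod 4;\\ Q_{k/2}, & \text{if } k \equiv 2 \pmod 4;\\ 1, & \text{if } k \equiv 1,3 \pmod 4.\end{cases}$$
   Context: The Pell sequence $(P_n)_{n\ge0}$ is defined by $P_0=0$, $P_1=1$, $P_n = 2P_{n-1}+P_{n-2}$. The associated Pell sequence $(Q_n)_{n\ge0}$ is defined by $Q_0=1$, $Q_1=1$, $Q_n=2Q_{n-1}+Q_{n-2}$. *)

theory Defs
  imports Main
begin

fun pell :: "nat \<Rightarrow> nat" where
  "pell 0 = 0"
| "pell (Suc 0) = 1"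
| "pell (Suc (Suc n)) = 2 * pell (Suc n) + pell n"

fun pellQ :: "nat \<Rightarrow> nat" where
  "pellQ 0 = 1"
| "pellQ (Suc 0) = 1"
| "pellQ (Suc (Suc n)) = 2 * pellQ (Suc n) + pellQ n"

definition pellGcd :: "nat \<Rightarrow> nat" where
  "pellGcd k = Gcd {(\<Sum>i=1..k. pell (n + i)) | n. True}"

end

theory Submission
  imports Defs
begin

definition pp :: "nat \<Rightarrow> int" where "pp n = int (pell n)"
definition qq :: "nat \<Rightarrow> int" where "qq n = int (pellQ n)"

lemma pp_rec: "pp (Suc (Suc n)) = 2 * pp (Suc n) + pp n"
  by (simp add: pp_def)
lemma qq_rec: "qq (Suc (Suc n)) = 2 * qq (Suc n) + qq n"
  by (simp add: qq_def)

lemma GH: "qq (Suc t) = qq t + 2 * pp t \<and> pp (Suc t) = pp t + qq t"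
proof (induction t)
  case 0 then show ?case by (simp add: pp_def qq_def)
next
  case (Suc t)
  then show ?case by (simp add: pp_rec qq_rec)
qed

lemma G: "qq (Suc t) = qq t + 2 * pp t" using GH by blast
lemma H: "pp (Suc t) = pp t + qq t" using GH by blast

lemma add_formulas:
  "qq (a + b) = qq a * qq b + 2 * pp a * pp b \<and> pp (a + b) = pp a * qq b + qq a * pp b"
proof (induction b)
  case 0 then show ?case by (simp add: pp_def qq_def)
next
  case (Suc b)
  then show ?case by (simp add: G H algebra_simps)
qed

lemma Fq: "qq (a + b) = qq a * qq b + 2 * pp a * pp b" using add_formulas by blast
lemma Fp: "pp (a + b) = pp a * qq b + qq a * pp b" using add_formulas by blast

lemma Cas: "qq h ^ 2 - 2 * pp h ^ 2 = (-1) ^ h"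
proof (induction h)
  case 0 then show ?case by (simp add: pp_def qq_def)
next
  case (Suc h)
  have "qq (Suc h) ^ 2 - 2 * pp (Suc h) ^ 2 = - (qq h ^ 2 - 2 * pp h ^ 2)"
    by (simp add: G H power2_eq_square algebra_simps)
  then show ?case using Suc by simp
qed

lemma Esub: "qq (h + j) * qq h - 2 * pp (h + j) * pp h = (-1) ^ h * qq j"
proof -
  have "qq (h + j) * qq h - 2 * pp (h + j) * pp h = qq j * (qq h ^ 2 - 2 * pp h ^ 2)"
    using Fq[of j h] Fp[of j h] by (simp add: add.commute power2_eq_square algebra_simps)
  then show ?thesis using Cas by simp
qed

lemma sum_formula: "2 * (\<Sum>i=1..m. pp (n + i)) = qq (n + m + 1) - qq (n + 1)"
proof (induction m)
  case 0 then show ?case by simp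
next
  case (Suc m)
  have "2 * (\<Sum>i=1..Suc m. pp (n + i)) = 2 * (\<Sum>i=1..m. pp (n + i)) + 2 * pp (n + Suc m)"
    by (simp add: algebra_simps)
  also have "\<dots> = qq (n + Suc m + 1) - qq (n + 1)"
    using Suc G[of "n + Suc m"] by simp
  finally show ?case .
qed

lemma S_int: "int (\<Sum>i=1..k. pell (n + i)) = (\<Sum>i=1..k. pp (n + i))"
  by (simp add: pp_def)

lemma even_case_formula:
  "2 * (\<Sum>i=1..2*h. pp (n + i)) =
     (if even h then 4 * pp h * pp (n+1+h) else 2 * qq h * qq (n+1+h))"
proof -
  define m where "m = n + 1 + h"
  have a: "qq (n + 2*h + 1) = qq m * qq h + 2 * pp m * pp h"
  proof -
    have "n + 2*h + 1 = m + h" by (simp add: m_def)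
    then show ?thesis using Fq[of m h] by (simp only:)
  qed
  have b: "qq m * qq h - 2 * pp m * pp h = (-1) ^ h * qq (n+1)"
    using Esub[of h "n+1"] by (simp add: m_def add.commute)
  have "2 * (\<Sum>i=1..2*h. pp (n + i)) = qq m * qq h + 2 * pp m * pp h - qq (n+1)"
    using sum_formula[of n "2*h"] a by simp
  moreover have "qq (n+1) = (-1)^h * (qq m * qq h - 2 * pp m * pp h)"
    using b by simp
  ultimately have eq: "2 * (\<Sum>i=1..2*h. pp (n + i)) = qq m * qq h + 2 * pp m * pp h - (-1)^h * (qq m * qq h - 2 * pp m * pp h)"
    by simp
  show ?thesis
  proof (cases "even h")
    case True
    then have "(-1::int)^h = 1" by simp
    then show ?thesis using eq True by (simp add: m_def algebra_simps)
  next
    case False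
    then have "(-1::int)^h = -1" by simp
    then show ?thesis using eq False by (simp add: m_def algebra_simps)
  qed
qed

lemma coprime_pp: "coprime (pell (Suc t)) (pell t)"
proof (induction t)
  case 0 then show ?case by simp
next
  case (Suc t)
  have "gcd (pell (Suc t)) (2 * pell (Suc t) + pell t) = 1"
    using Suc by (metis gcd_add_mult coprime_iff_gcd_eq_1 gcd.commute)
  then show ?case by (metis coprime_iff_gcd_eq_1 gcd.commute pell.simps(3) pellQ.simps(3))
qed

lemma coprime_qq: "coprime (pellQ (Suc t)) (pellQ t)"
proof (induction t)
  case 0 then show ?case by simp
next
  case (Suc t)
  have "gcd (pellQ (Suc t)) (2 * pellQ (Suc t) + pellQ t) = 1"
    using Suc by (metis gcd_add_mult coprime_iff_gcd_eq_1 gcd.commute)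
  then show ?case by (metis coprime_iff_gcd_eq_1 gcd.commute pell.simps(3) pellQ.simps(3))
qed

lemma S_char:
  fixes k :: nat
  defines "S \<equiv> \<lambda>n. (\<Sum>i=1..k. pell (n + i))"
  shows "pellGcd k dvd S n" and "(\<And>n. c dvd S n) \<Longrightarrow> c dvd pellGcd k"
proof -
  show "pellGcd k dvd S n" unfolding pellGcd_def S_def by (rule Gcd_dvd) blast
  show "(\<And>n. c dvd S n) \<Longrightarrow> c dvd pellGcd k" unfolding pellGcd_def S_def
    by (rule Gcd_greatest) blast
qed

lemma even_k:
  assumes "k = 2 * h"
  shows "pellGcd k = (if even h then 2 * pell h else pellQ h)"
proof -
  define S where "S \<equiv> \<lambda>n. (\<Sum>i=1..k. pell (n + i))"
  define T where "T = (if even h then 2 * pell h else pellQ h)"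
  define X where "X = (\<lambda>m. if even h then pell m else pellQ m)"
  have SX: "S n = T * X (n + 1 + h)" for n
  proof -
    have "2 * int (S n) = (if even h then 4 * pp h * pp (n+1+h) else 2 * qq h * qq (n+1+h))"
      using even_case_formula[where h=h and n=n] S_int[where k=k and n=n] assms by (simp add: S_def)
    then have "int (S n) = int (T * X (n + 1 + h))"
      by (auto simp: T_def X_def pp_def qq_def)
    then show ?thesis by (metis of_nat_eq_iff)
  qed
  have cop: "coprime (X (Suc m)) (X m)" for m
    using coprime_pp coprime_qq by (simp add: X_def)
  have "T dvd pellGcd k"
    using S_char(2)[where k=k and c=T] SX by (simp add: S_def)
  moreover have "pellGcd k dvd T"
  proof -
    have "pellGcd k dvd S 1" "pellGcd k dvd S 0" using S_char(1)[where k=k and n=1] S_char(1)[where k=k and n=0] by (simp_all add: S_def)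
    then have "pellGcd k dvd gcd (T * X (Suc (1 + h))) (T * X (1 + h))"
      using SX[of 1] SX[of 0] by (simp add: add.commute)
    also have "gcd (T * X (Suc (1 + h))) (T * X (1 + h)) = T"
      using cop[of "1 + h"] by (metis gcd_mult_distrib_nat coprime_iff_gcd_eq_1 mult_1_right)
    finally show ?thesis .
  qed
  ultimately show ?thesis using T_def dvd_antisym by blast
qed

lemma odd_k:
  assumes "k = 2 * j + 1"
  shows "pellGcd k = 1"
proof -
  define S where "S \<equiv> \<lambda>n. (\<Sum>i=1..k. pell (n + i))"
  define d where "d = pellGcd k"
  define D where "D = int d"
  have d0: "d dvd S 0" and d1: "d dvd S 1" using S_char(1)[where k=k and n=1] S_char(1)[where k=k and n=0] by (simp_all add: S_def d_def)
  have S0: "2 * int (S 0) = qq (k + 1) - qq 1" using sum_formula[where n=0 and m=k] S_int[where k=k and n=0]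
    by (simp add: S_def)
  have S1: "2 * int (S 1) = qq (k + 2) - qq 2" using sum_formula[where n=1 and m=k] S_int[where k=k and n=1]
    by (simp add: S_def add.commute numeral_2_eq_2)
  have q1: "qq 1 = 1" and q2: "qq 2 = 3" by (simp_all add: qq_def numeral_eq_Suc)
  have D0: "D dvd int (S 0)" and D1: "D dvd int (S 1)" using d0 d1 by (simp_all add: D_def)
  have Da: "D dvd qq (k+1) - 1" using D0 S0 q1 by (metis dvd_mult2 mult.commute)
  have Db: "D dvd qq (k+2) - 3" using D1 S1 q2 by (metis dvd_mult2 mult.commute)
  have rec: "qq (k+2) = 2 * qq (k+1) + qq k" using qq_rec[of k] by simp
  have Dc: "D dvd qq k - 1"
  proof -
    have "qq k - 1 = (qq (k+2) - 3) - 2 * (qq (k+1) - 1)" using rec by simp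
    then show ?thesis using Da Db by (metis dvd_diff dvd_mult)
  qed
  have Dd: "D dvd 2 * pp k"
  proof -
    have "2 * pp k = (qq (k+1) - 1) - (qq k - 1)" using G[of k] by simp
    then show ?thesis using Da Dc by (metis dvd_diff)
  qed
  define e :: int where "e = (-1) ^ j"
  have "e * e = ((-1) * (-1)) ^ j" unfolding e_def by (rule power_mult_distrib[symmetric])
  then have ee: "e * e = 1" by simp
  have kj: "k = j + (j + 1)" "k = (j + 1) + j" using assms by simp_all
  have E1: "qq k * qq j - 2 * pp k * pp j = e * qq (j+1)"
    using Esub[of j "j+1"] unfolding kj(1) e_def .
  have E2: "qq k * qq (j+1) - 2 * pp k * pp (j+1) = - e * qq j"
    using Esub[of "j+1" j] unfolding kj(2) e_def by simp
  have A: "D dvd e * qq (j+1) - qq j"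
  proof -
    have "e * qq (j+1) - qq j = (qq k - 1) * qq j - (2 * pp k) * pp j" using E1 by (simp add: algebra_simps)
    then show ?thesis using Dc Dd by (metis dvd_diff dvd_mult2)
  qed
  have B: "D dvd - e * qq j - qq (j+1)"
  proof -
    have "- e * qq j - qq (j+1) = (qq k - 1) * qq (j+1) - (2 * pp k) * pp (j+1)" using E2 by (simp add: algebra_simps)
    then show ?thesis using Dc Dd by (metis dvd_diff dvd_mult2)
  qed
  have "(-e) * (e * (e * qq (j+1) - qq j) + (- e * qq j - qq (j+1))) = 2 * qq j * (e * e) + e * qq (j+1) * (1 - e * e)"
    by algebra
  then have "2 * qq j = (-e) * (e * (e * qq (j+1) - qq j) + (- e * qq j - qq (j+1)))"
    using ee by simp
  then have Dj: "D dvd 2 * qq j" using A B by (metis dvd_add dvd_mult dvd_mult2)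
  have "e * (e * qq (j+1) - qq j) - (- e * qq j - qq (j+1)) = qq (j+1) * (e * e) + qq (j+1)"
    by algebra
  then have "2 * qq (j+1) = e * (e * qq (j+1) - qq j) - (- e * qq j - qq (j+1))"
    using ee by simp
  moreover have "D dvd e * (e * qq (j+1) - qq j) - (- e * qq j - qq (j+1))"
    by (rule dvd_diff[OF dvd_mult[OF A] B])
  ultimately have Dj1: "D dvd 2 * qq (j+1)" by metis
  have "int d dvd int (2 * pellQ j)" using Dj unfolding D_def qq_def by simp
  then have "d dvd 2 * pellQ j" by (simp only: int_dvd_int_iff)
  moreover have "int d dvd int (2 * pellQ (Suc j))" using Dj1 unfolding D_def qq_def by simp
  then have "d dvd 2 * pellQ (Suc j)" by (simp only: int_dvd_int_iff)
  ultimately have "d dvd gcd (2 * pellQ (Suc j)) (2 * pellQ j)" by simp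
  also have "\<dots> = 2" using coprime_qq[of j] by (metis gcd_mult_distrib_nat coprime_iff_gcd_eq_1 mult_1_right)
  finally have d2: "d dvd 2" .
  have diff: "int (S 1) - int (S 0) = pp (k+1) - 1"
  proof -
    have "2 * (int (S 1) - int (S 0)) = 2 * (pp (k+1) - 1)"
      using S0 S1 q1 q2 rec G[of k] G[of "k+1"] by (simp add: pp_def algebra_simps)
    then show ?thesis by simp
  qed
  have "k + 1 = (j+1) + (j+1)" using assms by simp
  then have "pp (k+1) = 2 * (pp (j+1) * qq (j+1))" using Fp[of "j+1" "j+1"] by (simp only:) simp
  then have oddd: "odd (int (S 1) - int (S 0))" using diff by simp
  have "odd d"
  proof
    assume "even d"
    then have "2 dvd int (S 1)" "2 dvd int (S 0)" using d0 d1
      by (meson dvd_trans even_of_nat_iff)+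
    then show False using oddd by simp
  qed
  moreover have "d \<le> 2" using d2 by (rule dvd_imp_le) simp
  moreover have "d \<noteq> 0" using d2 by (metis dvd_0_left_iff zero_neq_numeral)
  ultimately have "d = 1 \<or> d = 2" by arith
  then have "d = 1" using \<open>odd d\<close> by auto
  then show ?thesis by (simp add: d_def)
qed

theorem theorem15:
  fixes k :: nat
  assumes "k \<ge> 1"
  shows "pellGcd k = (if k mod 4 = 0 then 2 * pell (k div 2)
                      else if k mod 4 = 2 then pellQ (k div 2)
                      else 1)"
proof (cases "even k")
  case True
  then obtain h where k: "k = 2 * h" by blast
  have "even h \<longleftrightarrow> k mod 4 = 0" using k by presburger
  moreover have "odd h \<longleftrightarrow> k mod 4 = 2" using k by presburger
  ultimately show ?thesis using even_k[OF k] k by auto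
next
  case False
  then obtain j where k: "k = 2 * j + 1" using oddE by blast
  have "k mod 4 \<noteq> 0" "k mod 4 \<noteq> 2" using k by presburger+
  then show ?thesis using odd_k[OF k] by simp
qed

end
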